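(* Consider the three-door Monty Hall game described in the context. For every pure strategy $A$ of Conie there exists a door $u\in\{1,2,3\}$ (depending on $A$) such that $A$ loses against every pure strategy $(\theta,d)$ of Monte with $\theta=u$ (that is, whatever door $d$ Monte offers in case of a match). Consequently the always-switching strategy $u\,\mathrm{s}\,\mathrm{s}$ weakly dominates $A$: for every pure strategy $S$ of Monte, if $A$ wins against $S$ then $u\,\mathrm{s}\,\mathrm{s}$ wins against $S$.
   Context: Doors are numbered $1,2,3$. A pure strategy of Monte is a pair $(\theta,d)$ with $\theta\in\{1,2,3\}$ (the door hiding the prize) and $d\in\{1,2,3\}\setminus\{\theta\}$; there are six of them: $12,13,21,23,31,32$. A pure strategy of Conie is a triple $x\,a\,b$ with $x\in\{1,2,3\}$ (her initial choice) and $a,b\in\{\mathrm{h},\mathrm{s}\}$ (hold or switch); there are twelve of them. A play under the profile $((\theta,d),x\,a\,b)$ proceeds as follows: Monte offers door $y$, where $y=\theta$ if $x\neq\theta$ and $y=d$ if $x=\theta$ (a match). Conie's action is $a$ if $y$ is the smaller of the two doors in $\{1,2,3\}\setminus\{x\}$ and $b$ if it is the larger. Her final choice is $z=x$ if the action is $\mathrm{h}$ and $z=y$ if it is $\mathrm{s}$. Conie wins (payoff $1$) iff $z=\theta$, otherwise she gets payoff $0$. Strategies $x\,\mathrm{s}\,\mathrm{s}$ are called always-switching. *)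

theory Defs
  imports Main
begin

type_synonym door = nat

definition doors :: "door set" where "doors = {1,2,3}"

datatype action = Hold | Switch

type_synonym monte_strat = "door \<times> door"
type_synonym conie_strat = "door \<times> action \<times> action"

definition is_monte :: "monte_strat \<Rightarrow> bool" where
  "is_monte S = (case S of (\<theta>, d) \<Rightarrow> \<theta> \<in> doors \<and> d \<in> doors \<and> d \<noteq> \<theta>)"

definition is_conie :: "conie_strat \<Rightarrow> bool" where
  "is_conie A = (case A of (x, a, b) \<Rightarrow> x \<in> doors)"

definition offered :: "monte_strat \<Rightarrow> conie_strat \<Rightarrow> door" where
  "offered S A = (case S of (\<theta>, d) \<Rightarrow> case A of (x, a, b) \<Rightarrow> if x \<noteq> \<theta> then \<theta> else d)"

definition conie_action :: "monte_strat \<Rightarrow> conie_strat \<Rightarrow> action" where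
  "conie_action S A = (case A of (x, a, b) \<Rightarrow>
     if offered S A = Min (doors - {x}) then a else b)"

definition final_choice :: "monte_strat \<Rightarrow> conie_strat \<Rightarrow> door" where
  "final_choice S A = (case A of (x, a, b) \<Rightarrow>
     if conie_action S A = Hold then x else offered S A)"

definition wins :: "monte_strat \<Rightarrow> conie_strat \<Rightarrow> bool" where
  "wins S A = (final_choice S A = fst S)"

end

theory Submission
  imports Defs
begin

lemma Min3: "Min ({1,2,3::nat} - {1}) = 2" "Min ({1,2,3::nat} - {2}) = 1" "Min ({1,2,3::nat} - {3}) = 1"
  by (simp_all add: insert_Diff_if)

lemma allS: "(\<forall>S. is_monte S \<longrightarrow> P S) \<longleftrightarrow> (\<forall>t\<in>doors. \<forall>d\<in>doors. d \<noteq> t \<longrightarrow> P (t,d))"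
  by (auto simp: is_monte_def)

lemma allD: "(\<forall>d. is_monte (u,d) \<longrightarrow> P d) \<longleftrightarrow> (u \<in> doors \<longrightarrow> (\<forall>d\<in>doors. d \<noteq> u \<longrightarrow> P d))"
  by (auto simp: is_monte_def)

theorem mainTheorem1:
  assumes "is_conie A"
  shows "\<exists>u \<in> doors.
           (\<forall>d. is_monte (u, d) \<longrightarrow> \<not> wins (u, d) A) \<and>
           (\<forall>S. is_monte S \<longrightarrow> wins S A \<longrightarrow> wins S (u, Switch, Switch))"
proof -
  obtain x a b where A: "A = (x,a,b)" by (cases A) auto
  have x: "x \<in> {1,2,3}" using assms A by (simp add: is_conie_def doors_def)
  show ?thesis unfolding allS allD A
    using x apply (simp only: doors_def)
    apply (cases a; cases b; elim insertE; simp add: wins_def final_choice_def conie_action_def offered_def Min3 doors_def)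
    done
qed

end
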